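(* Let $\{\Theta_n\}_{n\ge0}$ be an insertional family of lattice congruences, $\Theta_n$ a congruence on the weak order on $S_n$. Then the injective linear map $c:\mathbb{K}[Z^\Theta_\infty]\to\mathbb{K}[S_\infty]$ satisfies $(c\otimes c)\circ\Delta_Z=\Delta_S\circ c$, so $c$ embeds $(\mathbb{K}[Z^\Theta_\infty],\Delta_Z)$ as a subcoalgebra of $(\mathbb{K}[S_\infty],\Delta_S)$.
   Context: $S_n$ is the set of permutations of $[n]$ in one-line notation $x=x_1\cdots x_n$ with the (right) weak order ($x\le y$ iff the set of inverted value pairs of $x$ is contained in that of $y$), a lattice. The standardization $\mathrm{st}(a_1,\dots,a_k)$ of a sequence of distinct integers is the $u\in S_k$ with $u_i<u_j\iff a_i<a_j$ ($\mathrm{st}$ of the empty sequence is the empty permutation in $S_0$). For a congruence $\Theta_n$ on $S_n$, $\pi_\downarrow x$ is the minimum of the class of $x$. Insertional: for all $p,q\ge0$ and every $p$-element subset $Q\subseteq[p+q]$, let $\varphi_Q:S_p\times S_q\to S_{p+q}$ send $(u,v)$ to the unique $x$ with $\{x_1,\dots,x_p\}=Q$, $\mathrm{st}(x_1,\dots,x_p)=u$, $\mathrm{st}(x_{p+1},\dots,x_{p+q})=v$; the family is insertional if whenever $u\equiv u'\pmod{\Theta_p}$ and $v\equiv v'\pmod{\Theta_q}$, then $\varphi_Q(u,v)\equiv\varphi_Q(u',v')\pmod{\Theta_{p+q}}$. $\mathbb{K}$ is a field; $\mathbb{K}[S_\infty]=\bigoplus_n\mathbb{K}[S_n]$ with Malvenuto–Reutenauer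 coproduct $\Delta_S(x)=\sum_{p=0}^n\mathrm{st}(x_1,\dots,x_p)\otimes\mathrm{st}(x_{p+1},\dots,x_n)$. Let $Z_n=\{x\in S_n:\pi_\downarrow x=x\}$, $\mathbb{K}[Z^\Theta_\infty]=\bigoplus_n\mathbb{K}[Z_n]$. The map $c$ sends $x\in Z_n$ to the sum of the elements of its $\Theta_n$-class; $r:\mathbb{K}[S_\infty]\to\mathbb{K}[Z^\Theta_\infty]$ is the linear map fixing $x$ if $\pi_\downarrow x=x$ and sending $x$ to $0$ otherwise. The coproduct on $\mathbb{K}[Z^\Theta_\infty]$ is $\Delta_Z=(r\otimes r)\circ\Delta_S\circ c$. *)

theory Defs
  imports Main "HOL-Library.Poly_Mapping"
begin

text \<open>Permutations of [n] in one-line notation, as lists over {1..n}. S_0 = {[]}.\<close>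
definition perms :: "nat \<Rightarrow> nat list set" where
  "perms n = {x. distinct x \<and> set x = {1..n}}"

definition inv_set :: "nat list \<Rightarrow> (nat \<times> nat) set" where
  "inv_set x = {(a, b). \<exists>i j. i < j \<and> j < length x \<and> x ! i = b \<and> x ! j = a \<and> a < b}"

definition weak_le :: "nat list \<Rightarrow> nat list \<Rightarrow> bool" where
  "weak_le x y \<longleftrightarrow> inv_set x \<subseteq> inv_set y"

definition weak_join :: "nat \<Rightarrow> nat list \<Rightarrow> nat list \<Rightarrow> nat list" where
  "weak_join n x y = (THE z. z \<in> perms n \<and> weak_le x z \<and> weak_le y z \<and>
      (\<forall>w\<in>perms n. weak_le x w \<and> weak_le y w \<longrightarrow> weak_le z w))"

definition weak_meet :: "nat \<Rightarrow> nat list \<Rightarrow> nat list \<Rightarrow> nat list" where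
  "weak_meet n x y = (THE z. z \<in> perms n \<and> weak_le z x \<and> weak_le z y \<and>
      (\<forall>w\<in>perms n. weak_le w x \<and> weak_le w y \<longrightarrow> weak_le w z))"

definition lattice_congruence :: "nat \<Rightarrow> (nat list \<times> nat list) set \<Rightarrow> bool" where
  "lattice_congruence n R \<longleftrightarrow> equiv (perms n) R \<and>
     (\<forall>x x' y y'. (x, x') \<in> R \<longrightarrow> (y, y') \<in> R \<longrightarrow>
        (weak_join n x y, weak_join n x' y') \<in> R \<and> (weak_meet n x y, weak_meet n x' y') \<in> R)"

definition st :: "nat list \<Rightarrow> nat list" where
  "st xs = map (\<lambda>a. card {b \<in> set xs. b \<le> a}) xs"

definition phi :: "nat set \<Rightarrow> nat \<Rightarrow> nat \<Rightarrow> nat list \<Rightarrow> nat list \<Rightarrow> nat list" where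
  "phi Q p q u v = (THE x. x \<in> perms (p + q) \<and> set (take p x) = Q \<and>
      st (take p x) = u \<and> st (drop p x) = v)"

definition insertional :: "(nat \<Rightarrow> (nat list \<times> nat list) set) \<Rightarrow> bool" where
  "insertional \<Theta> \<longleftrightarrow> (\<forall>p q Q u u' v v'. Q \<subseteq> {1..p+q} \<longrightarrow> card Q = p \<longrightarrow>
      u \<in> perms p \<longrightarrow> u' \<in> perms p \<longrightarrow> v \<in> perms q \<longrightarrow> v' \<in> perms q \<longrightarrow>
      (u, u') \<in> \<Theta> p \<longrightarrow> (v, v') \<in> \<Theta> q \<longrightarrow>
      (phi Q p q u v, phi Q p q u' v') \<in> \<Theta> (p + q))"

definition pi_down :: "(nat \<Rightarrow> (nat list \<times> nat list) set) \<Rightarrow> nat list \<Rightarrow> nat list" where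
  "pi_down \<Theta> x = (THE z. (x, z) \<in> \<Theta> (length x) \<and>
      (\<forall>w. (x, w) \<in> \<Theta> (length x) \<longrightarrow> weak_le z w))"

definition Zset :: "(nat \<Rightarrow> (nat list \<times> nat list) set) \<Rightarrow> nat \<Rightarrow> nat list set" where
  "Zset \<Theta> n = {x \<in> perms n. pi_down \<Theta> x = x}"

definition Zall :: "(nat \<Rightarrow> (nat list \<times> nat list) set) \<Rightarrow> nat list set" where
  "Zall \<Theta> = (\<Union>n. Zset \<Theta> n)"

definition Sall :: "nat list set" where
  "Sall = (\<Union>n. perms n)"

text \<open>K[X] is modelled as finitely supported functions from X to K whose support lies in X;
  K[X] \<otimes> K[Y] as finitely supported functions on X \<times> Y (basis u \<otimes> v = single (u,v) 1).\<close>

definition smult_pm :: "'k::field \<Rightarrow> ('a \<Rightarrow>\<^sub>0 'k) \<Rightarrow> ('a \<Rightarrow>\<^sub>0 'k)" where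
  "smult_pm a f = Poly_Mapping.map (\<lambda>c. a * c) f"

definition lin_ext :: "('a \<Rightarrow> ('b \<Rightarrow>\<^sub>0 'k::field)) \<Rightarrow> ('a \<Rightarrow>\<^sub>0 'k) \<Rightarrow> ('b \<Rightarrow>\<^sub>0 'k)" where
  "lin_ext g f = (\<Sum>x\<in>Poly_Mapping.keys f. smult_pm (Poly_Mapping.lookup f x) (g x))"

definition tensor :: "('a \<Rightarrow>\<^sub>0 'k::field) \<Rightarrow> ('b \<Rightarrow>\<^sub>0 'k) \<Rightarrow> ('a \<times> 'b \<Rightarrow>\<^sub>0 'k)" where
  "tensor f g = (\<Sum>x\<in>Poly_Mapping.keys f. \<Sum>y\<in>Poly_Mapping.keys g. Poly_Mapping.single (x, y) (Poly_Mapping.lookup f x * Poly_Mapping.lookup g y))"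

definition tensor_map ::
  "(('a \<Rightarrow>\<^sub>0 'k::field) \<Rightarrow> ('c \<Rightarrow>\<^sub>0 'k)) \<Rightarrow> (('b \<Rightarrow>\<^sub>0 'k) \<Rightarrow> ('d \<Rightarrow>\<^sub>0 'k))
     \<Rightarrow> ('a \<times> 'b \<Rightarrow>\<^sub>0 'k) \<Rightarrow> ('c \<times> 'd \<Rightarrow>\<^sub>0 'k)" where
  "tensor_map F G = lin_ext (\<lambda>(u, v). tensor (F (Poly_Mapping.single u 1)) (G (Poly_Mapping.single v 1)))"

definition Delta_S :: "(nat list \<Rightarrow>\<^sub>0 'k::field) \<Rightarrow> (nat list \<times> nat list \<Rightarrow>\<^sub>0 'k)" where
  "Delta_S = lin_ext (\<lambda>x. \<Sum>p\<in>{0..length x}. Poly_Mapping.single (st (take p x), st (drop p x)) 1)"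

definition cmap :: "(nat \<Rightarrow> (nat list \<times> nat list) set) \<Rightarrow> (nat list \<Rightarrow>\<^sub>0 'k::field) \<Rightarrow> (nat list \<Rightarrow>\<^sub>0 'k)" where
  "cmap \<Theta> = lin_ext (\<lambda>x. \<Sum>y\<in>{y \<in> perms (length x). (x, y) \<in> \<Theta> (length x)}. Poly_Mapping.single y 1)"

definition rmap :: "(nat \<Rightarrow> (nat list \<times> nat list) set) \<Rightarrow> (nat list \<Rightarrow>\<^sub>0 'k::field) \<Rightarrow> (nat list \<Rightarrow>\<^sub>0 'k)" where
  "rmap \<Theta> = lin_ext (\<lambda>x. if pi_down \<Theta> x = x then Poly_Mapping.single x 1 else 0)"

definition Delta_Z :: "(nat \<Rightarrow> (nat list \<times> nat list) set) \<Rightarrow> (nat list \<Rightarrow>\<^sub>0 'k::field) \<Rightarrow> (nat list \<times> nat list \<Rightarrow>\<^sub>0 'k)" where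
  "Delta_Z \<Theta> = tensor_map (rmap \<Theta>) (rmap \<Theta>) \<circ> Delta_S \<circ> cmap \<Theta>"

end

theory Submission
  imports Defs
begin


definition bef :: "nat list \<Rightarrow> nat \<Rightarrow> nat \<Rightarrow> bool" where
  "bef x a b \<longleftrightarrow> (\<exists>i j. i < j \<and> j < length x \<and> x ! i = a \<and> x ! j = b)"

lemma inv_set_bef: "inv_set x = {(a,b). a < b \<and> bef x b a}"
  unfolding inv_set_def bef_def by auto

lemma bef_set: "bef x a b \<Longrightarrow> a \<in> set x \<and> b \<in> set x"
  unfolding bef_def by auto

lemma bef_irrefl: assumes "distinct x" "bef x a b" shows "a \<noteq> b"
proof -
  obtain i j where "i < j" "j < length x" "x ! i = a" "x ! j = b" using assms(2) unfolding bef_def by blast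
  then show ?thesis using assms(1) nth_eq_iff_index_eq[of x i j] by auto
qed

lemma bef_asym: assumes "distinct x" "bef x a b" shows "\<not> bef x b a"
proof
  assume "bef x b a"
  obtain i j where 1: "i < j" "j < length x" "x ! i = a" "x ! j = b" using assms(2) unfolding bef_def by blast
  obtain k l where 2: "k < l" "l < length x" "x ! k = b" "x ! l = a" using \<open>bef x b a\<close> unfolding bef_def by blast
  have "i = l" using 1 2 assms(1) nth_eq_iff_index_eq[of x i l] by auto
  moreover have "j = k" using 1 2 assms(1) nth_eq_iff_index_eq[of x j k] by auto
  ultimately show False using 1 2 by simp
qed

lemma bef_trans: assumes "distinct x" "bef x a b" "bef x b c" shows "bef x a c"
proof -
  obtain i j where 1: "i < j" "j < length x" "x ! i = a" "x ! j = b" using assms(2) unfolding bef_def by blast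
  obtain k l where 2: "k < l" "l < length x" "x ! k = b" "x ! l = c" using assms(3) unfolding bef_def by blast
  have "j = k" using 1 2 assms(1) nth_eq_iff_index_eq[of x j k] by auto
  then show ?thesis unfolding bef_def using 1 2 by (intro exI[of _ i] exI[of _ l]) auto
qed

lemma bef_total: assumes "a \<in> set x" "b \<in> set x" "a \<noteq> b" shows "bef x a b \<or> bef x b a"
proof -
  obtain i where i: "i < length x" "x ! i = a" using assms(1) by (auto simp: in_set_conv_nth)
  obtain j where j: "j < length x" "x ! j = b" using assms(2) by (auto simp: in_set_conv_nth)
  have "i \<noteq> j" using i j assms(3) by auto
  then have "i < j \<or> j < i" by auto
  then show ?thesis unfolding bef_def using i j by blast
qed

lemma perms_length: "x \<in> perms n \<Longrightarrow> length x = n"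
proof -
  assume "x \<in> perms n"
  then have "distinct x" "set x = {1..n}" unfolding perms_def by auto
  then show ?thesis using distinct_card[of x] by simp
qed

lemma perms_distinct: "x \<in> perms n \<Longrightarrow> distinct x" unfolding perms_def by auto
lemma perms_set: "x \<in> perms n \<Longrightarrow> set x = {1..n}" unfolding perms_def by auto

lemma finite_perms: "finite (perms n)"
proof -
  have "perms n \<subseteq> {xs. set xs \<subseteq> {1..n} \<and> length xs = n}"
    using perms_length perms_set by auto
  then show ?thesis using finite_lists_length_eq[of "{1..n}" n] finite_subset by blast
qed

definition rk :: "nat list \<Rightarrow> nat \<Rightarrow> nat" where
  "rk x a = card {b \<in> set x. bef x b a}"

lemma rk_nth: assumes "distinct x" "i < length x" shows "rk x (x ! i) = i"
proof -
  have "{b \<in> set x. bef x b (x ! i)} = (\<lambda>j. x ! j) ` {..<i}"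
  proof (rule set_eqI, rule iffI)
    fix b assume "b \<in> {b \<in> set x. bef x b (x ! i)}"
    then obtain k j where "k < j" "j < length x" "x ! k = b" "x ! j = x ! i" unfolding bef_def by auto
    then have "j = i" using assms nth_eq_iff_index_eq by metis
    then show "b \<in> (\<lambda>j. x ! j) ` {..<i}" using \<open>k<j\<close> \<open>x!k=b\<close> by auto
  next
    fix b assume "b \<in> (\<lambda>j. x ! j) ` {..<i}"
    then show "b \<in> {b \<in> set x. bef x b (x ! i)}" unfolding bef_def using assms by auto
  qed
  moreover have "inj_on (\<lambda>j. x ! j) {..<i}" using assms by (simp add: inj_on_def nth_eq_iff_index_eq)
  ultimately show ?thesis unfolding rk_def by (simp add: card_image)
qed

lemma list_eq_bef:
  assumes "distinct x" "distinct y" "set x = set y" "\<And>a b. bef x a b \<longleftrightarrow> bef y a b"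
  shows "x = y"
proof -
  have len: "length x = length y" using assms distinct_card by metis
  have rkeq: "rk x = rk y" unfolding rk_def using assms by auto
  show ?thesis
  proof (rule nth_equalityI[OF len])
    fix i assume i: "i < length x"
    have yi: "y ! i \<in> set x" using i len assms(3) by auto
    then obtain j where j: "j < length x" "x ! j = y ! i" by (metis in_set_conv_nth)
    have "rk x (x ! j) = i" using rkeq rk_nth[OF assms(2)] i len j by metis
    then have "j = i" using rk_nth[OF assms(1) j(1)] by simp
    then show "x ! i = y ! i" using j by simp
  qed
qed

lemma bef_inv:
  assumes "x \<in> perms n" "a \<in> {1..n}" "b \<in> {1..n}"
  shows "bef x a b \<longleftrightarrow> (a < b \<and> (a,b) \<notin> inv_set x) \<or> (b < a \<and> (b,a) \<in> inv_set x)"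
proof -
  have d: "distinct x" and s: "set x = {1..n}" using assms(1) perms_distinct perms_set by auto
  show ?thesis
  proof (cases "a = b")
    case True then show ?thesis using bef_irrefl[OF d] by auto
  next
    case False
    then have t: "bef x a b \<or> bef x b a" using bef_total[of a x b] s assms by auto
    show ?thesis unfolding inv_set_bef using t bef_asym[OF d, of a b] bef_asym[OF d, of b a] False
      by (cases "a < b") auto
  qed
qed

lemma perms_eq_inv:
  assumes "x \<in> perms n" "y \<in> perms n" "inv_set x = inv_set y" shows "x = y"
proof (rule list_eq_bef)
  show "distinct x" "distinct y" "set x = set y" using assms perms_distinct perms_set by auto
  fix a b
  show "bef x a b \<longleftrightarrow> bef y a b"
  proof (cases "a \<in> {1..n} \<and> b \<in> {1..n}")
    case True then show ?thesis using bef_inv[OF assms(1)] bef_inv[OF assms(2)] assms(3) by auto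
  next
    case False then show ?thesis using bef_set perms_set assms(1,2) by blast
  qed
qed



lemma perm_of_order:
  assumes fin: "finite S" and irr: "\<And>a. \<not> P a a"
    and tr: "\<And>a b c. a \<in> S \<Longrightarrow> b \<in> S \<Longrightarrow> c \<in> S \<Longrightarrow> P a b \<Longrightarrow> P b c \<Longrightarrow> P a c"
    and tot: "\<And>a b. a \<in> S \<Longrightarrow> b \<in> S \<Longrightarrow> a \<noteq> b \<Longrightarrow> P a b \<or> P b a"
  shows "\<exists>z. distinct z \<and> set z = S \<and> (\<forall>a\<in>S. \<forall>b\<in>S. bef z a b \<longleftrightarrow> P a b)"
proof -
  define r where "r a = card {c \<in> S. P c a}" for a
  have mono: "r a < r b" if "a \<in> S" "b \<in> S" "P a b" for a b
  proof -
    have "{c \<in> S. P c a} \<subseteq> {c \<in> S. P c b}" using that tr[of _ a b] by blast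
    moreover have "a \<in> {c \<in> S. P c b}" "a \<notin> {c \<in> S. P c a}" using that irr by auto
    ultimately have "{c \<in> S. P c a} \<subset> {c \<in> S. P c b}" by blast
    then show ?thesis unfolding r_def using fin by (simp add: psubset_card_mono)
  qed
  define z where "z = sort_key r (sorted_list_of_set S)"
  have dz: "distinct z" unfolding z_def by simp
  have sz: "set z = S" unfolding z_def using fin by simp
  have so: "sorted (map r z)" unfolding z_def by (simp only: sorted_sort_key)
  have befr: "r a < r b" if bz: "bef z a b" for a b
  proof -
    obtain i j where ij: "i < j" "j < length z" "z ! i = a" "z ! j = b" using bz unfolding bef_def by blast
    have "(map r z) ! i \<le> (map r z) ! j" using sorted_nth_mono[OF so, of i j] ij by simp
    then have le: "r a \<le> r b" using ij by simp
    have "a \<noteq> b" using bef_irrefl[OF dz bz] .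
    moreover have "a \<in> S" "b \<in> S" using bef_set[OF bz] sz by auto
    ultimately have "P a b \<or> P b a" using tot by blast
    then have "r a < r b \<or> r b < r a" using mono[of a b] mono[of b a] \<open>a \<in> S\<close> \<open>b \<in> S\<close> by blast
    then show ?thesis using le by simp
  qed
  have "\<forall>a\<in>S. \<forall>b\<in>S. bef z a b \<longleftrightarrow> P a b"
  proof (intro ballI iffI)
    fix a b assume ab: "a \<in> S" "b \<in> S"
    {
      assume "bef z a b"
      then have "r a < r b" by (rule befr)
      moreover have "a \<noteq> b" using \<open>r a < r b\<close> by auto
      ultimately show "P a b" using tot[OF ab] mono[OF ab(2) ab(1)] by (meson not_less_iff_gr_or_eq)
    }
    {
      assume "P a b"
      then have "a \<noteq> b" using irr by auto
      then have "bef z a b \<or> bef z b a" using bef_total[of a z b] ab sz by auto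
      then show "bef z a b" using befr[of b a] mono[OF ab \<open>P a b\<close>] by auto
    }
  qed
  then show ?thesis using dz sz by blast
qed

definition Nrel :: "nat list \<Rightarrow> (nat \<times> nat) set" where
  "Nrel x = {(a,b). a < b \<and> bef x a b}"

lemma inv_char:
  assumes "x \<in> perms n"
  shows "(a,b) \<in> inv_set x \<longleftrightarrow> a < b \<and> a \<in> {1..n} \<and> b \<in> {1..n} \<and> \<not> bef x a b"
proof -
  have d: "distinct x" and s: "set x = {1..n}" using assms perms_distinct perms_set by auto
  show ?thesis unfolding inv_set_bef
    using bef_asym[OF d, of b a] bef_total[of a x b] bef_set[of x b a] s by auto
qed

lemma split_base:
  assumes "x \<in> perms n" "(d,c) \<in> Nrel x" "d < b" "b < c" "b \<in> {1..n}"
  shows "(d,b) \<in> Nrel x \<or> (b,c) \<in> Nrel x"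
proof -
  have dx: "distinct x" and s: "set x = {1..n}" using assms perms_distinct perms_set by auto
  have dc: "bef x d c" using assms(2) unfolding Nrel_def by auto
  have "d \<in> set x" using bef_set[OF dc] by auto
  then have "bef x d b \<or> bef x b d" using bef_total[of d x b] assms s by auto
  then show ?thesis
  proof
    assume "bef x d b" then show ?thesis using assms unfolding Nrel_def by auto
  next
    assume "bef x b d" then have "bef x b c" using bef_trans[OF dx _ dc] by auto
    then show ?thesis using assms unfolding Nrel_def by auto
  qed
qed

lemma Nrel_tr_less: "(a,c) \<in> (Nrel x \<union> Nrel y)\<^sup>+ \<Longrightarrow> a < c"
  by (induction rule: trancl_induct) (auto simp: Nrel_def)

lemma split_tr:
  assumes x: "x \<in> perms n" and y: "y \<in> perms n"
    and ac: "(a,c) \<in> (Nrel x \<union> Nrel y)\<^sup>+"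
  shows "a < m \<Longrightarrow> m < c \<Longrightarrow> m \<in> {1..n} \<Longrightarrow>
     (a,m) \<in> (Nrel x \<union> Nrel y)\<^sup>+ \<or> (m,c) \<in> (Nrel x \<union> Nrel y)\<^sup>+"
  using ac
proof (induction arbitrary: m rule: trancl_induct)
  case (base c)
  then have "(a,m) \<in> Nrel x \<union> Nrel y \<or> (m,c) \<in> Nrel x \<union> Nrel y"
    using split_base[OF x, of a c m] split_base[OF y, of a c m] by auto
  then show ?case by auto
next
  case (step d c)
  have ad: "a < d" using Nrel_tr_less[OF step.hyps(1)] .
  show ?case
  proof (cases "m < d")
    case True then show ?thesis using step by (meson trancl.trancl_into_trancl)
  next
    case False
    show ?thesis
    proof (cases "m = d")
      case True then show ?thesis using step by auto
    next
      case False
      then have "d < m" using \<open>\<not> m < d\<close> by auto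
      then have "(d,m) \<in> Nrel x \<union> Nrel y \<or> (m,c) \<in> Nrel x \<union> Nrel y"
        using split_base[OF x, of d c m] split_base[OF y, of d c m] step by auto
      then show ?thesis using step.hyps(1) by (meson r_into_trancl' trancl.trancl_into_trancl)
    qed
  qed
qed

lemma Nrel_trans: "distinct w \<Longrightarrow> trans (Nrel w)"
  unfolding trans_def Nrel_def using bef_trans by fastforce

lemma meet_ex:
  assumes x: "x \<in> perms n" and y: "y \<in> perms n"
  shows "\<exists>z\<in>perms n. inv_set z \<subseteq> inv_set x \<and> inv_set z \<subseteq> inv_set y \<and>
     (\<forall>w\<in>perms n. inv_set w \<subseteq> inv_set x \<and> inv_set w \<subseteq> inv_set y \<longrightarrow> inv_set w \<subseteq> inv_set z)"
proof -
  define T where "T = (Nrel x \<union> Nrel y)\<^sup>+"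
  define P where "P a b \<longleftrightarrow> (a < b \<and> (a,b) \<in> T) \<or> (b < a \<and> (b,a) \<notin> T)" for a b
  let ?S = "{1..n::nat}"
  have Ttr: "(a,c) \<in> T" if "(a,b) \<in> T" "(b,c) \<in> T" for a b c
    using that unfolding T_def by (meson trancl_trans)
  have Tsp: "(a,b) \<in> T \<or> (b,c) \<in> T" if "(a,c) \<in> T" "a < b" "b < c" "b \<in> ?S" for a b c
    using that split_tr[OF x y] unfolding T_def by blast
  have "\<exists>z. distinct z \<and> set z = ?S \<and> (\<forall>a\<in>?S. \<forall>b\<in>?S. bef z a b \<longleftrightarrow> P a b)"
  proof (rule perm_of_order)
    show "finite ?S" by simp
    show "\<not> P a a" for a unfolding P_def by auto
    show "P a b \<or> P b a" if "a \<noteq> b" for a b using that unfolding P_def by auto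
    show "P a c" if "a \<in> ?S" "b \<in> ?S" "c \<in> ?S" "P a b" "P b c" for a b c
    proof -
      note s1 = Tsp[of a b c] and s2 = Tsp[of b c a] and s3 = Tsp[of c a b]
      note t1 = Ttr[of a b c] and t2 = Ttr[of c a b] and t3 = Ttr[of b c a]
      have ab: "(a < b \<and> (a,b) \<in> T) \<or> (b < a \<and> (b,a) \<notin> T)" using that(4) unfolding P_def .
      have bc: "(b < c \<and> (b,c) \<in> T) \<or> (c < b \<and> (c,b) \<notin> T)" using that(5) unfolding P_def .
      have "(a < c \<and> (a,c) \<in> T) \<or> (c < a \<and> (c,a) \<notin> T)"
      proof (cases "a < b")
        case True
        then have abT: "(a,b) \<in> T" using ab by auto
        show ?thesis
        proof (cases "b < c")
          case True
          then have "(b,c) \<in> T" using bc by auto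
          then show ?thesis using t1[OF abT] \<open>a < b\<close> True by simp
        next
          case False
          then have cb: "c < b" "(c,b) \<notin> T" using bc by auto
          show ?thesis
          proof (cases "a < c")
            case True then show ?thesis using s1[OF abT True cb(1) that(3)] cb(2) True by blast
          next
            case False
            then have "c < a \<or> c = a" by auto
            then show ?thesis using t2[OF _ abT] cb abT by auto
          qed
        qed
      next
        case False
        then have ba: "b < a" "(b,a) \<notin> T" using ab by auto
        show ?thesis
        proof (cases "b < c")
          case True
          then have bcT: "(b,c) \<in> T" using bc by auto
          show ?thesis
          proof (cases "a < c")
            case True then show ?thesis using s2[OF bcT ba(1) True that(1)] ba(2) True by blast
          next
            case False
            then have "c < a \<or> c = a" by auto
            then show ?thesis using t3[OF bcT] ba bcT by auto
          qed
        next
          case False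
          then have cb: "c < b" "(c,b) \<notin> T" using bc by auto
          then have "c < a" using ba by simp
          then show ?thesis using s3[OF _ cb(1) ba(1) that(2)] ba(2) cb(2) by blast
        qed
      qed
      then show ?thesis unfolding P_def .
    qed
  qed
  then obtain z where dz: "distinct z" and sz: "set z = ?S" and bz: "\<forall>a\<in>?S. \<forall>b\<in>?S. bef z a b \<longleftrightarrow> P a b"
    by blast
  have zp: "z \<in> perms n" unfolding perms_def using dz sz by auto
  have invz: "(a,b) \<in> inv_set z \<longleftrightarrow> a < b \<and> a \<in> ?S \<and> b \<in> ?S \<and> (a,b) \<notin> T" for a b
    using inv_char[OF zp, of a b] bz unfolding P_def by auto
  have NT: "Nrel x \<subseteq> T" "Nrel y \<subseteq> T" unfolding T_def by auto
  have inx: "(a,b) \<notin> Nrel x \<Longrightarrow> a < b \<Longrightarrow> a \<in> ?S \<Longrightarrow> b \<in> ?S \<Longrightarrow> (a,b) \<in> inv_set x" for a b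
    using inv_char[OF x] unfolding Nrel_def by auto
  have iny: "(a,b) \<notin> Nrel y \<Longrightarrow> a < b \<Longrightarrow> a \<in> ?S \<Longrightarrow> b \<in> ?S \<Longrightarrow> (a,b) \<in> inv_set y" for a b
    using inv_char[OF y] unfolding Nrel_def by auto
  have 1: "inv_set z \<subseteq> inv_set x"
  proof (clarify)
    fix a b assume "(a,b) \<in> inv_set z"
    then have "a < b" "a \<in> ?S" "b \<in> ?S" "(a,b) \<notin> T" using invz by auto
    then show "(a,b) \<in> inv_set x" using inx NT(1) by blast
  qed
  have 2: "inv_set z \<subseteq> inv_set y"
  proof (clarify)
    fix a b assume "(a,b) \<in> inv_set z"
    then have "a < b" "a \<in> ?S" "b \<in> ?S" "(a,b) \<notin> T" using invz by auto
    then show "(a,b) \<in> inv_set y" using iny NT(2) by blast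
  qed
  have 3: "inv_set w \<subseteq> inv_set z" if w: "w \<in> perms n" "inv_set w \<subseteq> inv_set x" "inv_set w \<subseteq> inv_set y" for w
  proof -
    have "Nrel x \<subseteq> Nrel w"
    proof
      fix p assume "p \<in> Nrel x"
      then obtain a b where p: "p = (a,b)" "a < b" "bef x a b" unfolding Nrel_def by auto
      then have "a \<in> ?S" "b \<in> ?S" using bef_set perms_set[OF x] by auto
      moreover have "(a,b) \<notin> inv_set x" using inv_char[OF x] p by auto
      ultimately have "bef w a b" using inv_char[OF w(1), of a b] w(2) p by auto
      then show "p \<in> Nrel w" using p unfolding Nrel_def by auto
    qed
    moreover have "Nrel y \<subseteq> Nrel w"
    proof
      fix p assume "p \<in> Nrel y"
      then obtain a b where p: "p = (a,b)" "a < b" "bef y a b" unfolding Nrel_def by auto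
      then have "a \<in> ?S" "b \<in> ?S" using bef_set perms_set[OF y] by auto
      moreover have "(a,b) \<notin> inv_set y" using inv_char[OF y] p by auto
      ultimately have "bef w a b" using inv_char[OF w(1), of a b] w(3) p by auto
      then show "p \<in> Nrel w" using p unfolding Nrel_def by auto
    qed
    ultimately have "T \<subseteq> Nrel w"
      unfolding T_def using trancl_mono[of _ "Nrel x \<union> Nrel y" "Nrel w"]
        trancl_id[OF Nrel_trans[OF perms_distinct[OF w(1)]]] by blast
    then show ?thesis using invz inv_char[OF w(1)] unfolding Nrel_def by auto
  qed
  show ?thesis using zp 1 2 3 by blast
qed



lemma inv_finite: "finite (inv_set x)"
proof -
  have "inv_set x \<subseteq> set x \<times> set x" unfolding inv_set_bef using bef_set by auto
  then show ?thesis using finite_subset by blast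
qed

lemma meet_spec:
  assumes x: "x \<in> perms n" and y: "y \<in> perms n"
  shows "weak_meet n x y \<in> perms n \<and> weak_le (weak_meet n x y) x \<and> weak_le (weak_meet n x y) y \<and>
      (\<forall>w\<in>perms n. weak_le w x \<and> weak_le w y \<longrightarrow> weak_le w (weak_meet n x y))"
proof -
  let ?Q = "\<lambda>z. z \<in> perms n \<and> weak_le z x \<and> weak_le z y \<and>
      (\<forall>w\<in>perms n. weak_le w x \<and> weak_le w y \<longrightarrow> weak_le w z)"
  obtain z where z: "?Q z" using meet_ex[OF x y] unfolding weak_le_def by blast
  have "\<exists>!z. ?Q z"
  proof (rule ex1I[of _ z])
    show "?Q z" by (rule z)
    fix z' assume z': "?Q z'"
    then have "inv_set z' = inv_set z" using z unfolding weak_le_def by blast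
    then show "z' = z" using perms_eq_inv z z' by blast
  qed
  then have "?Q (THE z. ?Q z)" by (rule theI')
  then show ?thesis unfolding weak_meet_def .
qed

lemma meet_self:
  assumes x: "x \<in> perms n"
  shows "weak_meet n x x = x"
proof -
  have s: "weak_meet n x x \<in> perms n" "weak_le (weak_meet n x x) x"
     "weak_le x (weak_meet n x x)"
    using meet_spec[OF x x] x unfolding weak_le_def by auto
  then have "inv_set (weak_meet n x x) = inv_set x" unfolding weak_le_def by blast
  then show ?thesis using perms_eq_inv s(1) x by blast
qed

lemma cong_sub: "lattice_congruence n R \<Longrightarrow> (a,b) \<in> R \<Longrightarrow> a \<in> perms n \<and> b \<in> perms n"
  unfolding lattice_congruence_def equiv_def by blast

lemma cong_sym: "lattice_congruence n R \<Longrightarrow> (a,b) \<in> R \<Longrightarrow> (b,a) \<in> R"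
  unfolding lattice_congruence_def equiv_def by (meson symD)

lemma cong_trans: "lattice_congruence n R \<Longrightarrow> (a,b) \<in> R \<Longrightarrow> (b,c) \<in> R \<Longrightarrow> (a,c) \<in> R"
  unfolding lattice_congruence_def equiv_def by (meson transD)

lemma cong_refl: "lattice_congruence n R \<Longrightarrow> a \<in> perms n \<Longrightarrow> (a,a) \<in> R"
  unfolding lattice_congruence_def equiv_def by (meson refl_onD)

lemma cong_meet: "lattice_congruence n R \<Longrightarrow> (x,x') \<in> R \<Longrightarrow> (y,y') \<in> R \<Longrightarrow>
   (weak_meet n x y, weak_meet n x' y') \<in> R"
  unfolding lattice_congruence_def by blast

lemma class_min:
  assumes R: "lattice_congruence n R" and x: "x \<in> perms n"
  shows "\<exists>m. (x,m) \<in> R \<and> (\<forall>w. (x,w) \<in> R \<longrightarrow> weak_le m w)"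
proof -
  have "(x,x) \<in> R" using cong_refl[OF R x] .
  then obtain m where m: "(x,m) \<in> R" and least: "\<And>m'. (x,m') \<in> R \<Longrightarrow> card (inv_set m) \<le> card (inv_set m')"
    using ex_has_least_nat[of "\<lambda>m. (x,m) \<in> R" x "\<lambda>m. card (inv_set m)"] by blast
  have mp: "m \<in> perms n" using cong_sub[OF R m] by blast
  have "weak_le m w" if w: "(x,w) \<in> R" for w
  proof -
    have wp: "w \<in> perms n" using cong_sub[OF R w] by blast
    have mw: "(m,w) \<in> R" using cong_trans[OF R cong_sym[OF R m] w] .
    have "(weak_meet n m m, weak_meet n m w) \<in> R" using cong_meet[OF R cong_refl[OF R mp] mw] .
    then have mm': "(m, weak_meet n m w) \<in> R" using meet_self[OF mp] by simp
    then have xm': "(x, weak_meet n m w) \<in> R" using cong_trans[OF R m] by blast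
    have sp: "weak_le (weak_meet n m w) m" "weak_le (weak_meet n m w) w"
      using meet_spec[OF mp wp] by auto
    have "card (inv_set m) \<le> card (inv_set (weak_meet n m w))" using least[OF xm'] .
    then have "inv_set (weak_meet n m w) = inv_set m"
      using sp(1) inv_finite card_subset_eq unfolding weak_le_def by (metis antisym card_mono)
    then show ?thesis using sp(2) unfolding weak_le_def by simp
  qed
  then show ?thesis using m by blast
qed

lemma pi_spec:
  assumes cong: "\<And>n. lattice_congruence n (Th n)" and x: "x \<in> perms n"
  shows "(x, pi_down Th x) \<in> Th n \<and> (\<forall>w. (x,w) \<in> Th n \<longrightarrow> weak_le (pi_down Th x) w)"
proof -
  have len: "length x = n" using perms_length[OF x] .
  let ?Q = "\<lambda>z. (x, z) \<in> Th n \<and> (\<forall>w. (x, w) \<in> Th n \<longrightarrow> weak_le z w)"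
  obtain m where m: "?Q m" using class_min[OF cong x] by blast
  have "\<exists>!z. ?Q z"
  proof (rule ex1I[of _ m])
    show "?Q m" by (rule m)
    fix z assume z: "?Q z"
    then have "inv_set z = inv_set m" using m unfolding weak_le_def by blast
    moreover have "z \<in> perms n" "m \<in> perms n" using cong_sub[OF cong] z m by blast+
    ultimately show "z = m" using perms_eq_inv by blast
  qed
  then have "?Q (THE z. ?Q z)" by (rule theI')
  then show ?thesis unfolding pi_down_def len .
qed

lemma pi_unique:
  assumes cong: "\<And>n. lattice_congruence n (Th n)" and x: "x \<in> perms n"
    and m: "(x,m) \<in> Th n" "\<forall>w. (x,w) \<in> Th n \<longrightarrow> weak_le m w"
  shows "pi_down Th x = m"
proof -
  have p: "(x, pi_down Th x) \<in> Th n" "\<forall>w. (x,w) \<in> Th n \<longrightarrow> weak_le (pi_down Th x) w"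
    using pi_spec[OF cong x] by auto
  then have "inv_set (pi_down Th x) = inv_set m" using m unfolding weak_le_def by blast
  moreover have "pi_down Th x \<in> perms n" "m \<in> perms n" using cong_sub[OF cong] p m by blast+
  ultimately show ?thesis using perms_eq_inv by blast
qed

lemma pi_eq:
  assumes cong: "\<And>n. lattice_congruence n (Th n)" and xy: "(x,y) \<in> Th n"
  shows "pi_down Th x = pi_down Th y"
proof -
  have x: "x \<in> perms n" and y: "y \<in> perms n" using cong_sub[OF cong xy] by auto
  have p: "(y, pi_down Th y) \<in> Th n" "\<forall>w. (y,w) \<in> Th n \<longrightarrow> weak_le (pi_down Th y) w"
    using pi_spec[OF cong y] by auto
  have "(x, pi_down Th y) \<in> Th n" using cong_trans[OF cong xy p(1)] .
  moreover have "\<forall>w. (x,w) \<in> Th n \<longrightarrow> weak_le (pi_down Th y) w"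
    using p(2) cong_trans[OF cong cong_sym[OF cong xy]] by blast
  ultimately show ?thesis using pi_unique[OF cong x] by blast
qed

lemma pi_rel: "(\<And>n. lattice_congruence n (Th n)) \<Longrightarrow> x \<in> perms n \<Longrightarrow> (x, pi_down Th x) \<in> Th n"
  using pi_spec by blast

lemma pi_perm: "(\<And>n. lattice_congruence n (Th n)) \<Longrightarrow> x \<in> perms n \<Longrightarrow> pi_down Th x \<in> perms n"
  using pi_rel cong_sub by blast

lemma pi_idem: "(\<And>n. lattice_congruence n (Th n)) \<Longrightarrow> x \<in> perms n \<Longrightarrow> pi_down Th (pi_down Th x) = pi_down Th x"
  using pi_rel pi_eq by metis

lemma Zrep:
  assumes cong: "\<And>n. lattice_congruence n (Th n)" and u: "pi_down Th u = u" and ua: "(u,a) \<in> Th n"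
  shows "u = pi_down Th a"
  using pi_eq[OF cong ua] u by simp



definition rank :: "nat set \<Rightarrow> nat \<Rightarrow> nat" where
  "rank S a = card {b \<in> S. b \<le> a}"

lemma st_rank: "st xs = map (rank (set xs)) xs"
  unfolding st_def rank_def by simp

lemma length_st[simp]: "length (st xs) = length xs" unfolding st_def by simp

lemma rank_less: assumes "finite S" "b \<in> S" "a < b" shows "rank S a < rank S b"
proof -
  have "{c \<in> S. c \<le> a} \<subseteq> {c \<in> S. c \<le> b}" "b \<in> {c \<in> S. c \<le> b}" "b \<notin> {c \<in> S. c \<le> a}"
    using assms by auto
  then have "{c \<in> S. c \<le> a} \<subset> {c \<in> S. c \<le> b}" by blast
  then show ?thesis unfolding rank_def using assms(1) by (simp add: psubset_card_mono)
qed

lemma rank_inj: assumes "finite S" shows "inj_on (rank S) S"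
proof (rule inj_onI)
  fix a b assume "a \<in> S" "b \<in> S" "rank S a = rank S b"
  then show "a = b" using rank_less[OF assms, of a b] rank_less[OF assms, of b a]
    by (cases a b rule: linorder_cases) auto
qed

lemma rank_range: assumes "finite S" "a \<in> S" shows "rank S a \<in> {1..card S}"
proof -
  have "a \<in> {b \<in> S. b \<le> a}" using assms by auto
  moreover have "finite {b \<in> S. b \<le> a}" using assms(1) by simp
  ultimately have "card {b \<in> S. b \<le> a} > 0" by (auto simp: card_gt_0_iff)
  then have "card {b \<in> S. b \<le> a} \<ge> 1" by simp
  moreover have "card {b \<in> S. b \<le> a} \<le> card S" using assms(1) by (intro card_mono) auto
  ultimately show ?thesis unfolding rank_def by auto
qed

lemma rank_img: assumes "finite S" shows "rank S ` S = {1..card S}"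
proof -
  have sub: "rank S ` S \<subseteq> {1..card S}" using rank_range[OF assms] by auto
  have "card (rank S ` S) = card S" using card_image[OF rank_inj[OF assms]] .
  then show ?thesis using card_subset_eq[OF _ sub] by simp
qed

lemma st_perm: assumes "distinct xs" shows "st xs \<in> perms (length xs)"
proof -
  have inj: "inj_on (rank (set xs)) (set xs)" by (rule rank_inj) simp
  have "distinct (st xs)" unfolding st_rank using assms inj by (simp add: distinct_map)
  moreover have "set (st xs) = {1..length xs}" unfolding st_rank
    using rank_img[of "set xs"] distinct_card[OF assms] by simp
  ultimately show ?thesis unfolding perms_def by simp
qed

lemma st_inj:
  assumes "distinct xs" "distinct ys" "set xs = set ys" "st xs = st ys"
  shows "xs = ys"
proof -
  have inj: "inj_on (rank (set xs)) (set xs \<union> set ys)" using rank_inj[of "set xs"] assms(3) by simp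
  have "map (rank (set xs)) xs = map (rank (set xs)) ys" using assms(3,4) unfolding st_rank by simp
  then show ?thesis using inj_on_map_eq_map[OF inj] by simp
qed

lemma st_map_mono:
  assumes mono: "\<And>a b. a \<in> set xs \<Longrightarrow> b \<in> set xs \<Longrightarrow> a < b \<Longrightarrow> g a < g b"
  shows "st (map g xs) = st xs"
proof -
  let ?S = "set xs"
  have inj: "inj_on g ?S"
  proof (rule inj_onI)
    fix a b assume ab: "a \<in> ?S" "b \<in> ?S" "g a = g b"
    then show "a = b" using mono[OF ab(1,2)] mono[OF ab(2,1)] by (cases a b rule: linorder_cases) auto
  qed
  have le: "g b \<le> g a \<longleftrightarrow> b \<le> a" if "a \<in> ?S" "b \<in> ?S" for a b
    using mono[OF that] mono[OF that(2,1)] by (cases a b rule: linorder_cases) auto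
  have "rank (g ` ?S) (g a) = rank ?S a" if a: "a \<in> ?S" for a
  proof -
    have "{c \<in> g ` ?S. c \<le> g a} = g ` {b \<in> ?S. b \<le> a}" using le[OF a] by auto
    moreover have "inj_on g {b \<in> ?S. b \<le> a}" using inj by (rule inj_on_subset) auto
    ultimately show ?thesis unfolding rank_def by (simp add: card_image)
  qed
  then show ?thesis unfolding st_rank by simp
qed

lemma st_id: assumes "a \<in> perms p" shows "st a = a"
proof -
  have s: "set a = {1..p}" using perms_set[OF assms] .
  have "rank {1..p} i = i" if "i \<in> {1..p}" for i
  proof -
    have "{b \<in> {1..p}. b \<le> i} = {1..i}" using that by auto
    then show ?thesis unfolding rank_def by simp
  qed
  then show ?thesis unfolding st_rank s by (intro map_idI) (auto simp: s)
qed

lemma sorted_list_nth_img: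
  assumes "finite Q" "card Q = p"
  shows "(\<lambda>i. sorted_list_of_set Q ! (i - 1)) ` {1..p} = Q"
proof -
  let ?qs = "sorted_list_of_set Q"
  have len: "length ?qs = p" using assms by simp
  have "(\<lambda>i. ?qs ! (i - 1)) ` {1..p} = (\<lambda>k. ?qs ! k) ` ((\<lambda>i. i - 1) ` {1..p})" by (simp add: image_image)
  also have "(\<lambda>i. i - 1) ` {1..p} = {..<p}"
  proof (rule set_eqI, rule iffI)
    fix k assume "k \<in> {..<p}" then show "k \<in> (\<lambda>i. i - 1) ` {1..p}" by (intro image_eqI[of _ _ "k+1"]) auto
  qed auto
  also have "(\<lambda>k. ?qs ! k) ` {..<p} = set ?qs" unfolding set_conv_nth len by auto
  finally show ?thesis using assms by simp
qed

lemma sorted_list_nth_mono: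
  assumes "finite Q" "card Q = p" "i \<in> {1..p}" "j \<in> {1..p}" "i < j"
  shows "sorted_list_of_set Q ! (i - 1) < sorted_list_of_set Q ! (j - 1)"
proof -
  have "sorted_wrt (<) (sorted_list_of_set Q)" by (rule strict_sorted_list_of_set)
  moreover have "length (sorted_list_of_set Q) = p" using assms by simp
  ultimately show ?thesis using sorted_wrt_nth_less[of "(<)" "sorted_list_of_set Q" "i - 1" "j - 1"] assms
    by auto
qed

lemma phi_ex:
  assumes Q: "Q \<subseteq> {1..p+q}" "card Q = p" and a: "a \<in> perms p" and b: "b \<in> perms q"
  shows "\<exists>x. x \<in> perms (p+q) \<and> set (take p x) = Q \<and> st (take p x) = a \<and> st (drop p x) = b"
proof -
  let ?R = "{1..p+q} - Q"
  have fQ: "finite Q" using Q finite_subset by blast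
  have fR: "finite ?R" by simp
  have cR: "card ?R = q" using Q card_Diff_subset[OF fQ Q(1)] by simp
  define g where "g i = sorted_list_of_set Q ! (i - 1)" for i
  define h where "h i = sorted_list_of_set ?R ! (i - 1)" for i
  have sa: "set a = {1..p}" and la: "length a = p" and da: "distinct a"
    using a perms_set perms_length perms_distinct by auto
  have sb: "set b = {1..q}" and lb: "length b = q" and db: "distinct b"
    using b perms_set perms_length perms_distinct by auto
  have gm: "g i < g j" if "i \<in> set a" "j \<in> set a" "i < j" for i j
    unfolding g_def using sorted_list_nth_mono[OF fQ Q(2)] that sa by auto
  have hm: "h i < h j" if "i \<in> set b" "j \<in> set b" "i < j" for i j
    unfolding h_def using sorted_list_nth_mono[OF fR cR] that sb by auto
  have ga: "set (map g a) = Q" unfolding g_def using sorted_list_nth_img[OF fQ Q(2)] sa by simp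
  have hb: "set (map h b) = ?R" unfolding h_def using sorted_list_nth_img[OF fR cR] sb by simp
  have ig: "inj_on g (set a)"
  proof (rule inj_onI)
    fix i j assume ij: "i \<in> set a" "j \<in> set a" "g i = g j"
    then show "i = j" using gm[OF ij(1,2)] gm[OF ij(2,1)] by (cases i j rule: linorder_cases) auto
  qed
  have ih: "inj_on h (set b)"
  proof (rule inj_onI)
    fix i j assume ij: "i \<in> set b" "j \<in> set b" "h i = h j"
    then show "i = j" using hm[OF ij(1,2)] hm[OF ij(2,1)] by (cases i j rule: linorder_cases) auto
  qed
  define x where "x = map g a @ map h b"
  have tk: "take p x = map g a" unfolding x_def using la by simp
  have dr: "drop p x = map h b" unfolding x_def using la by simp
  have "distinct x" unfolding x_def using da db ig ih ga hb by (auto simp: distinct_map)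
  moreover have "set x = {1..p+q}" unfolding x_def using ga hb Q by auto
  ultimately have "x \<in> perms (p+q)" unfolding perms_def by simp
  moreover have "st (take p x) = a" unfolding tk using st_map_mono[of a g] gm st_id[OF a] by simp
  moreover have "st (drop p x) = b" unfolding dr using st_map_mono[of b h] hm st_id[OF b] by simp
  ultimately show ?thesis using tk ga by (intro exI[of _ x]) simp
qed

lemma take_drop_perm_uniq:
  assumes x: "x \<in> perms n" and y: "y \<in> perms n"
    and "set (take p x) = set (take p y)" "st (take p x) = st (take p y)" "st (drop p x) = st (drop p y)"
  shows "x = y"
proof -
  have dx: "distinct x" and dy: "distinct y" using x y perms_distinct by auto
  have sx: "set x = {1..n}" and sy: "set y = {1..n}" using x y perms_set by auto
  have t: "take p x = take p y" using st_inj[of "take p x" "take p y"] assms(3,4) dx dy by simp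
  have "set (drop p x) = {1..n} - set (take p x)"
    using sx dx distinct_append[of "take p x" "drop p x"] set_append[of "take p x" "drop p x"]
    by (auto simp del: distinct_append set_append)
  moreover have "set (drop p y) = {1..n} - set (take p y)"
    using sy dy distinct_append[of "take p y" "drop p y"] set_append[of "take p y" "drop p y"]
    by (auto simp del: distinct_append set_append)
  ultimately have "drop p x = drop p y" using st_inj[of "drop p x" "drop p y"] assms(3,5) dx dy by simp
  then show ?thesis using t by (metis append_take_drop_id)
qed

lemma phi_spec:
  assumes Q: "Q \<subseteq> {1..p+q}" "card Q = p" and a: "a \<in> perms p" and b: "b \<in> perms q"
  shows "phi Q p q a b \<in> perms (p+q) \<and> set (take p (phi Q p q a b)) = Q \<and>
     st (take p (phi Q p q a b)) = a \<and> st (drop p (phi Q p q a b)) = b"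
proof -
  let ?P = "\<lambda>x. x \<in> perms (p+q) \<and> set (take p x) = Q \<and> st (take p x) = a \<and> st (drop p x) = b"
  obtain x where x: "?P x" using phi_ex[OF Q a b] by blast
  have "\<exists>!x. ?P x"
  proof (rule ex1I[of _ x])
    show "?P x" by (rule x)
    fix y assume "?P y" then show "y = x" using x take_drop_perm_uniq[of y "p+q" x p] by auto
  qed
  then have "?P (THE x. ?P x)" by (rule theI')
  then show ?thesis unfolding phi_def .
qed

lemma phi_of:
  assumes y: "y \<in> perms (p+q)" and a: "st (take p y) = a" and b: "st (drop p y) = b"
  shows "phi (set (take p y)) p q a b = y"
proof -
  have ly: "length y = p + q" using perms_length[OF y] .
  have dy: "distinct y" using perms_distinct[OF y] .
  have Q: "set (take p y) \<subseteq> {1..p+q}" by (rule subset_trans[OF set_take_subset]) (simp add: perms_set[OF y])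
  have cQ: "card (set (take p y)) = p" using distinct_card[of "take p y"] dy ly by simp
  have ap: "a \<in> perms p" using st_perm[of "take p y"] dy a ly by simp
  have bp: "b \<in> perms q" using st_perm[of "drop p y"] dy b ly by simp
  define z where "z = phi (set (take p y)) p q a b"
  have sp: "z \<in> perms (p+q)" "set (take p z) = set (take p y)" "st (take p z) = a" "st (drop p z) = b"
    using phi_spec[OF Q cQ ap bp] unfolding z_def by auto
  have "z = y" using take_drop_perm_uniq[OF sp(1) y, of p] sp(2-4) a b by simp
  then show ?thesis unfolding z_def .
qed



definition cls :: "(nat \<Rightarrow> (nat list \<times> nat list) set) \<Rightarrow> nat list \<Rightarrow> nat list set" where
  "cls Th x = {y \<in> perms (length x). (x, y) \<in> Th (length x)}"

definition cnt :: "(nat \<Rightarrow> (nat list \<times> nat list) set) \<Rightarrow> nat list \<Rightarrow> nat list \<Rightarrow> nat list \<Rightarrow> nat" where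
  "cnt Th x a b = card {y \<in> cls Th x. length a \<le> length y \<and> st (take (length a) y) = a \<and> st (drop (length a) y) = b}"

lemma finite_cls: "finite (cls Th x)"
  unfolding cls_def using finite_perms by simp

lemma cnt_zero:
  assumes "\<not> (a \<in> perms (length a) \<and> b \<in> perms (length b))"
  shows "cnt Th x a b = 0"
proof -
  have "{y \<in> cls Th x. length a \<le> length y \<and> st (take (length a) y) = a \<and> st (drop (length a) y) = b} = {}"
  proof (rule ccontr)
    assume "\<not> ?thesis"
    then obtain y where y: "y \<in> cls Th x" "length a \<le> length y" "st (take (length a) y) = a" "st (drop (length a) y) = b"
      by blast
    have dy: "distinct y" using y(1) perms_distinct unfolding cls_def by blast
    have "st (take (length a) y) \<in> perms (length (take (length a) y))" using st_perm[OF distinct_take[OF dy]] .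
    moreover have "length (take (length a) y) = length a" using y(2) by simp
    ultimately have 1: "a \<in> perms (length a)" using y(3) by simp
    have "st (drop (length a) y) \<in> perms (length (drop (length a) y))" using st_perm[OF distinct_drop[OF dy]] .
    moreover have "length b = length (drop (length a) y)" using y(4) length_st by metis
    ultimately have 2: "b \<in> perms (length b)" using y(4) by simp
    show False using 1 2 assms by blast
  qed
  then show ?thesis unfolding cnt_def by (metis card.empty)
qed

lemma cnt_len:
  assumes "cnt Th x a b \<noteq> 0"
  shows "length a + length b = length x"
proof -
  have "{y \<in> cls Th x. length a \<le> length y \<and> st (take (length a) y) = a \<and> st (drop (length a) y) = b} \<noteq> {}"
    using assms unfolding cnt_def by (metis card.empty)
  then obtain y where y: "y \<in> cls Th x" "length a \<le> length y" "st (take (length a) y) = a" "st (drop (length a) y) = b"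
    by blast
  have ly: "length y = length x" using y(1) perms_length unfolding cls_def by blast
  have "length b = length y - length a" using y(4) length_st[of "drop (length a) y"] by simp
  then show ?thesis using y(2) ly by simp
qed

lemma cnt_card:
  assumes x: "x \<in> perms n" and a: "a \<in> perms p" and b: "b \<in> perms q" and n: "p + q = n"
  shows "cnt Th x a b = card {Q. Q \<subseteq> {1..n} \<and> card Q = p \<and> (x, phi Q p q a b) \<in> Th n}"
proof -
  let ?QS = "{Q. Q \<subseteq> {1..n} \<and> card Q = p \<and> (x, phi Q p q a b) \<in> Th n}"
  let ?Y = "{y \<in> cls Th x. length a \<le> length y \<and> st (take (length a) y) = a \<and> st (drop (length a) y) = b}"
  have lx: "length x = n" using perms_length[OF x] .
  have la: "length a = p" using perms_length[OF a] .
  have Yeq: "?Y = (\<lambda>Q. phi Q p q a b) ` ?QS"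
  proof (rule set_eqI, rule iffI)
    fix y assume "y \<in> ?Y"
    then have y: "y \<in> perms n" "(x,y) \<in> Th n" "st (take p y) = a" "st (drop p y) = b"
      unfolding cls_def lx la by auto
    have yp: "y \<in> perms (p+q)" using y(1) n by simp
    have e: "phi (set (take p y)) p q a b = y" using phi_of[OF yp y(3,4)] .
    have ly: "length y = n" using perms_length[OF y(1)] .
    have "set (take p y) \<subseteq> {1..n}" by (rule subset_trans[OF set_take_subset]) (simp add: perms_set[OF y(1)])
    moreover have "card (set (take p y)) = p" using distinct_card[of "take p y"] perms_distinct[OF y(1)] ly n by simp
    ultimately have "set (take p y) \<in> ?QS" using e y(2) by simp
    then show "y \<in> (\<lambda>Q. phi Q p q a b) ` ?QS" using e by (intro image_eqI[of _ _ "set (take p y)"]) simp_all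
  next
    fix y assume "y \<in> (\<lambda>Q. phi Q p q a b) ` ?QS"
    then obtain Q where Q: "Q \<subseteq> {1..n}" "card Q = p" "(x, phi Q p q a b) \<in> Th n" and yQ: "y = phi Q p q a b" by blast
    have q1: "Q \<subseteq> {1..p+q}" "card Q = p" using Q n by auto
    have sp: "y \<in> perms (p+q)" "st (take p y) = a" "st (drop p y) = b"
      using phi_spec[OF q1 a b] unfolding yQ by auto
    have yn: "y \<in> perms n" using sp(1) n by simp
    have ly: "length y = n" using perms_length[OF yn] .
    have xy: "(x,y) \<in> Th n" using Q(3) yQ by simp
    have "y \<in> cls Th x" unfolding cls_def lx using yn xy by simp
    moreover have "length a \<le> length y" using la ly n by simp
    ultimately show "y \<in> ?Y" using sp(2,3) la by simp
  qed
  have inj: "inj_on (\<lambda>Q. phi Q p q a b) ?QS"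
  proof (rule inj_onI)
    fix Q Q' assume QQ: "Q \<in> ?QS" "Q' \<in> ?QS" and e: "phi Q p q a b = phi Q' p q a b"
    have q1: "Q \<subseteq> {1..p+q}" "card Q = p" using QQ(1) n by auto
    have q2: "Q' \<subseteq> {1..p+q}" "card Q' = p" using QQ(2) n by auto
    have "set (take p (phi Q p q a b)) = Q" by (rule conjunct1[OF conjunct2[OF phi_spec[OF q1 a b]]])
    moreover have "set (take p (phi Q' p q a b)) = Q'" by (rule conjunct1[OF conjunct2[OF phi_spec[OF q2 a b]]])
    ultimately show "Q = Q'" using e by metis
  qed
  have "card ((\<lambda>Q. phi Q p q a b) ` ?QS) = card ?QS" by (rule card_image[OF inj])
  then show ?thesis unfolding cnt_def Yeq .
qed

lemma cnt_inv:
  assumes cong: "\<And>n. lattice_congruence n (Th n)" and ins: "insertional Th"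
    and x: "x \<in> perms n" and aa: "(a,a') \<in> Th p" and bb: "(b,b') \<in> Th q"
  shows "cnt Th x a b = cnt Th x a' b'"
proof -
  have a: "a \<in> perms p" and a': "a' \<in> perms p" using cong_sub[OF cong aa] by auto
  have b: "b \<in> perms q" and b': "b' \<in> perms q" using cong_sub[OF cong bb] by auto
  have lens: "length a = p" "length a' = p" "length b = q" "length b' = q" "length x = n"
    using a a' b b' x perms_length by auto
  show ?thesis
  proof (cases "p + q = n")
    case True
    have "{Q. Q \<subseteq> {1..n} \<and> card Q = p \<and> (x, phi Q p q a b) \<in> Th n} =
          {Q. Q \<subseteq> {1..n} \<and> card Q = p \<and> (x, phi Q p q a' b') \<in> Th n}"
    proof (rule Collect_cong)
      fix Q
      show "(Q \<subseteq> {1..n} \<and> card Q = p \<and> (x, phi Q p q a b) \<in> Th n) =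
            (Q \<subseteq> {1..n} \<and> card Q = p \<and> (x, phi Q p q a' b') \<in> Th n)"
      proof (cases "Q \<subseteq> {1..n} \<and> card Q = p")
        case True2: True
        have "(phi Q p q a b, phi Q p q a' b') \<in> Th (p + q)"
          using ins True2 a a' b b' aa bb True unfolding insertional_def by blast
        then have r: "(phi Q p q a b, phi Q p q a' b') \<in> Th n" using True by simp
        show ?thesis using cong_trans[OF cong _ r] cong_trans[OF cong _ cong_sym[OF cong r]] True2 by blast
      qed blast
    qed
    then show ?thesis using cnt_card[OF x a b True] cnt_card[OF x a' b' True] by simp
  next
    case False
    then have "cnt Th x a b = 0" "cnt Th x a' b' = 0" using cnt_len[of Th x a b] cnt_len[of Th x a' b'] lens by auto
    then show ?thesis by simp
  qed
qed



abbreviation lk where "lk \<equiv> Poly_Mapping.lookup"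

lemma lookup_smult: "lk (smult_pm a f) k = a * lk f k"
  unfolding smult_pm_def by (simp add: Poly_Mapping.map.rep_eq when_def)

lemma lookup_lin_ext: "lk (lin_ext g f) k = (\<Sum>x\<in>Poly_Mapping.keys f. lk f x * lk (g x) k)"
  unfolding lin_ext_def by (simp add: lookup_sum lookup_smult)

lemma lookup_lin_ext_sub:
  assumes "finite A" "Poly_Mapping.keys f \<subseteq> A"
  shows "lk (lin_ext g f) k = (\<Sum>x\<in>A. lk f x * lk (g x) k)"
  unfolding lookup_lin_ext
  by (rule sum.mono_neutral_left[OF assms]) (simp add: in_keys_iff)

lemma lookup_tensor: "lk (tensor f g) (a, b) = lk f a * lk g b"
proof -
  have inner: "(\<Sum>y\<in>Poly_Mapping.keys g. lk (Poly_Mapping.single (x, y) (lk f x * lk g y)) (a, b))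
      = (if x = a then lk f x * lk g b else 0)" for x
  proof (cases "x = a")
    case True
    have "(\<Sum>y\<in>Poly_Mapping.keys g. lk (Poly_Mapping.single (x, y) (lk f x * lk g y)) (a, b))
        = (\<Sum>y\<in>Poly_Mapping.keys g. if y = b then lk f x * lk g y else 0)"
      using True by (intro sum.cong) (auto simp: lookup_single when_def)
    also have "\<dots> = lk f x * lk g b" by (simp add: in_keys_iff)
    finally show ?thesis using True by simp
  next
    case False
    then show ?thesis by (simp add: lookup_single when_def)
  qed
  have "lk (tensor f g) (a, b) = (\<Sum>x\<in>Poly_Mapping.keys f. \<Sum>y\<in>Poly_Mapping.keys g.
      lk (Poly_Mapping.single (x, y) (lk f x * lk g y)) (a, b))"
    unfolding tensor_def by (simp add: lookup_sum)
  also have "\<dots> = (\<Sum>x\<in>Poly_Mapping.keys f. if x = a then lk f x * lk g b else 0)"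
    using inner by simp
  also have "\<dots> = lk f a * lk g b" by (simp add: in_keys_iff)
  finally show ?thesis .
qed

lemma lookup_sum_single:
  assumes "finite A"
  shows "lk (\<Sum>y\<in>A. Poly_Mapping.single y (1::'k::field)) a = (if a \<in> A then 1 else 0)"
proof -
  have "lk (\<Sum>y\<in>A. Poly_Mapping.single y (1::'k)) a = (\<Sum>y\<in>A. if y = a then 1 else 0)"
    by (simp add: lookup_sum lookup_single when_def)
  also have "\<dots> = (if a \<in> A then 1 else 0)" using assms by simp
  finally show ?thesis .
qed

lemma lin_ext_single: "lin_ext g (Poly_Mapping.single u (1::'k::field)) = g u"
proof (rule poly_mapping_eqI)
  fix k show "lk (lin_ext g (Poly_Mapping.single u (1::'k))) k = lk (g u) k"
    unfolding lookup_lin_ext by simp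
qed

lemma lookup_tensor_map:
  "lk (tensor_map F G H) (a, b) =
     (\<Sum>p\<in>Poly_Mapping.keys H. lk H p * (lk (F (Poly_Mapping.single (fst p) 1)) a * lk (G (Poly_Mapping.single (snd p) 1)) b))"
  unfolding tensor_map_def lookup_lin_ext
  by (intro sum.cong refl) (auto simp: lookup_tensor split: prod.splits)

lemma rmap_single: "rmap Th (Poly_Mapping.single u (1::'k::field)) = (if pi_down Th u = u then Poly_Mapping.single u 1 else 0)"
  unfolding rmap_def by (rule lin_ext_single)

lemma cmap_single: "cmap Th (Poly_Mapping.single u (1::'k::field)) = (\<Sum>y\<in>cls Th u. Poly_Mapping.single y 1)"
  unfolding cmap_def lin_ext_single cls_def by simp

lemma lookup_cmap_single: "lk (cmap Th (Poly_Mapping.single u (1::'k::field))) a = (if a \<in> cls Th u then 1 else 0)"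
  unfolding cmap_single by (rule lookup_sum_single[OF finite_cls])

lemma lookup_cmap: "lk (cmap Th (f :: nat list \<Rightarrow>\<^sub>0 'k::field)) y = (\<Sum>x\<in>Poly_Mapping.keys f. lk f x * (if y \<in> cls Th x then 1 else 0))"
proof -
  have "lk (cmap Th f) y = (\<Sum>x\<in>Poly_Mapping.keys f. lk f x * lk (\<Sum>y\<in>cls Th x. Poly_Mapping.single y (1::'k)) y)"
    unfolding cmap_def lookup_lin_ext cls_def by simp
  also have "\<dots> = (\<Sum>x\<in>Poly_Mapping.keys f. lk f x * (if y \<in> cls Th x then 1 else 0))"
    by (intro sum.cong refl arg_cong[where f="\<lambda>t. lk f _ * t"] lookup_sum_single[OF finite_cls])
  finally show ?thesis .
qed

definition Dc :: "nat list \<Rightarrow> nat list \<Rightarrow> nat list \<Rightarrow> bool" where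
  "Dc y a b \<longleftrightarrow> length a \<le> length y \<and> st (take (length a) y) = a \<and> st (drop (length a) y) = b"

lemma lookup_DS_basis:
  "lk (\<Sum>p\<in>{0..length y}. Poly_Mapping.single (st (take p y), st (drop p y)) (1::'k::field)) (a, b)
     = (if Dc y a b then 1 else 0)"
proof -
  have "lk (\<Sum>p\<in>{0..length y}. Poly_Mapping.single (st (take p y), st (drop p y)) (1::'k)) (a, b)
      = (\<Sum>p\<in>{0..length y}. if st (take p y) = a \<and> st (drop p y) = b then 1 else 0)"
    by (simp add: lookup_sum lookup_single when_def)
  also have "\<dots> = (\<Sum>p\<in>{0..length y}. if p = length a then (if st (take (length a) y) = a \<and> st (drop (length a) y) = b then 1 else 0) else 0)"
  proof (rule sum.cong[OF refl])
    fix p assume "p \<in> {0..length y}"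
    then have "length (st (take p y)) = p" by simp
    then show "(if st (take p y) = a \<and> st (drop p y) = b then (1::'k) else 0) =
      (if p = length a then (if st (take (length a) y) = a \<and> st (drop (length a) y) = b then 1 else 0) else 0)"
      by auto
  qed
  also have "\<dots> = (if Dc y a b then 1 else 0)" unfolding Dc_def by simp
  finally show ?thesis .
qed

lemma lookup_DS: "lk (Delta_S (F :: nat list \<Rightarrow>\<^sub>0 'k::field)) (a, b) = (\<Sum>y\<in>Poly_Mapping.keys F. lk F y * (if Dc y a b then 1 else 0))"
  unfolding Delta_S_def lookup_lin_ext lookup_DS_basis ..

lemma cnt_Dc: "cnt Th x a b = card {y \<in> cls Th x. Dc y a b}"
  unfolding cnt_def Dc_def ..

lemma lookup_G:
  "lk (Delta_S (cmap Th (f :: nat list \<Rightarrow>\<^sub>0 'k::field))) (a, b) = (\<Sum>x\<in>Poly_Mapping.keys f. lk f x * of_nat (cnt Th x a b))"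
proof -
  define A where "A = (\<Union>x\<in>Poly_Mapping.keys f. cls Th x)"
  have fA: "finite A" unfolding A_def using finite_cls by simp
  have kA: "Poly_Mapping.keys (cmap Th f) \<subseteq> A"
  proof
    fix y assume "y \<in> Poly_Mapping.keys (cmap Th f)"
    then have "lk (cmap Th f) y \<noteq> 0" by (simp add: in_keys_iff)
    then have "(\<Sum>x\<in>Poly_Mapping.keys f. lk f x * (if y \<in> cls Th x then 1 else 0)) \<noteq> (0::'k)"
      unfolding lookup_cmap .
    then obtain x where "x \<in> Poly_Mapping.keys f" "lk f x * (if y \<in> cls Th x then 1 else 0) \<noteq> (0::'k)"
      by (meson sum.neutral)
    then show "y \<in> A" unfolding A_def by (auto split: if_splits)
  qed
  have "lk (Delta_S (cmap Th f)) (a, b) = (\<Sum>y\<in>A. lk (cmap Th f) y * (if Dc y a b then 1 else 0))"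
    unfolding Delta_S_def lookup_lin_ext_sub[OF fA kA] lookup_DS_basis ..
  also have "\<dots> = (\<Sum>y\<in>A. \<Sum>x\<in>Poly_Mapping.keys f. lk f x * ((if y \<in> cls Th x then 1 else 0) * (if Dc y a b then 1 else 0)))"
    unfolding lookup_cmap sum_distrib_right by (simp add: mult.assoc)
  also have "\<dots> = (\<Sum>x\<in>Poly_Mapping.keys f. \<Sum>y\<in>A. lk f x * ((if y \<in> cls Th x then 1 else 0) * (if Dc y a b then 1 else 0)))"
    by (rule sum.swap)
  also have "\<dots> = (\<Sum>x\<in>Poly_Mapping.keys f. lk f x * of_nat (cnt Th x a b))"
  proof (rule sum.cong[OF refl])
    fix x assume x: "x \<in> Poly_Mapping.keys f"
    have sub: "cls Th x \<subseteq> A" unfolding A_def using x by auto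
    have "(\<Sum>y\<in>A. (if y \<in> cls Th x then 1 else 0) * (if Dc y a b then 1 else (0::'k)))
        = (\<Sum>y\<in>A. if y \<in> cls Th x \<and> Dc y a b then 1 else 0)"
      by (intro sum.cong refl) simp
    also have "\<dots> = (\<Sum>y\<in>{y \<in> A. y \<in> cls Th x \<and> Dc y a b}. 1)"
      using sum.inter_filter[OF fA, of "\<lambda>_. (1::'k)" "\<lambda>y. y \<in> cls Th x \<and> Dc y a b"] by simp
    also have "{y \<in> A. y \<in> cls Th x \<and> Dc y a b} = {y \<in> cls Th x. Dc y a b}" using sub by auto
    finally have "(\<Sum>y\<in>A. (if y \<in> cls Th x then 1 else 0) * (if Dc y a b then 1 else (0::'k)))
        = of_nat (cnt Th x a b)" unfolding cnt_Dc by simp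
    then show "(\<Sum>y\<in>A. lk f x * ((if y \<in> cls Th x then 1 else 0) * (if Dc y a b then 1 else 0)))
        = lk f x * of_nat (cnt Th x a b)" by (simp add: sum_distrib_left[symmetric])
  qed
  finally show ?thesis .
qed



lemma in_cls_iff:
  assumes cong: "\<And>n. lattice_congruence n (Th n)" and u: "pi_down Th u = u"
  shows "a \<in> cls Th u \<longleftrightarrow> a \<in> perms (length a) \<and> u = pi_down Th a"
proof
  assume "a \<in> cls Th u"
  then have a: "a \<in> perms (length u)" and ua: "(u, a) \<in> Th (length u)" unfolding cls_def by auto
  have "length a = length u" using perms_length[OF a] .
  then show "a \<in> perms (length a) \<and> u = pi_down Th a" using a Zrep[OF cong u ua] by simp
next
  assume h: "a \<in> perms (length a) \<and> u = pi_down Th a"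
  then have up: "u \<in> perms (length a)" using pi_perm[OF cong] by blast
  have lu: "length u = length a" using perms_length[OF up] .
  have "(u, a) \<in> Th (length a)" using h cong_sym[OF cong pi_rel[OF cong]] by blast
  then show "a \<in> cls Th u" unfolding cls_def lu using h by simp
qed

lemma Zall_iff: "x \<in> Zall Th \<longleftrightarrow> x \<in> perms (length x) \<and> pi_down Th x = x"
proof
  assume "x \<in> Zall Th"
  then obtain n where "x \<in> Zset Th n" unfolding Zall_def by blast
  then show "x \<in> perms (length x) \<and> pi_down Th x = x" unfolding Zset_def using perms_length by auto
next
  assume "x \<in> perms (length x) \<and> pi_down Th x = x"
  then have "x \<in> Zset Th (length x)" unfolding Zset_def by simp
  then show "x \<in> Zall Th" unfolding Zall_def by blast
qed

lemma lookup_cmap_Z: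
  assumes cong: "\<And>n. lattice_congruence n (Th n)"
    and kf: "Poly_Mapping.keys (f :: nat list \<Rightarrow>\<^sub>0 'k::field) \<subseteq> Zall Th" and z: "z \<in> Zall Th"
  shows "lk (cmap Th f) z = lk f z"
proof -
  have zz: "z \<in> perms (length z)" "pi_down Th z = z" using z Zall_iff by auto
  have "lk (cmap Th f) z = (\<Sum>x\<in>Poly_Mapping.keys f. lk f x * (if z \<in> cls Th x then 1 else 0))"
    by (rule lookup_cmap)
  also have "\<dots> = (\<Sum>x\<in>Poly_Mapping.keys f. if z = x then lk f x else 0)"
  proof (rule sum.cong[OF refl])
    fix x assume "x \<in> Poly_Mapping.keys f"
    then have "pi_down Th x = x" using kf Zall_iff by blast
    then have "z \<in> cls Th x \<longleftrightarrow> z = x" using in_cls_iff[OF cong, of x z] zz by auto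
    then show "lk f x * (if z \<in> cls Th x then 1 else 0) = (if z = x then lk f x else 0)" by simp
  qed
  also have "\<dots> = lk f z" by (simp add: in_keys_iff)
  finally show ?thesis .
qed

lemma lookH:
  "lk (tensor_map (rmap Th) (rmap Th) (G :: nat list \<times> nat list \<Rightarrow>\<^sub>0 'k::field)) (u, v) =
     (if pi_down Th u = u \<and> pi_down Th v = v then lk G (u, v) else 0)"
proof -
  have "lk (tensor_map (rmap Th) (rmap Th) G) (u, v) =
     (\<Sum>p\<in>Poly_Mapping.keys G. if (u, v) = p then (if pi_down Th u = u \<and> pi_down Th v = v then lk G p else 0) else 0)"
    unfolding lookup_tensor_map
  proof (rule sum.cong[OF refl])
    fix p :: "nat list \<times> nat list"
    obtain p1 p2 where p: "p = (p1, p2)" by (cases p)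
    show "lk G p * (lk (rmap Th (Poly_Mapping.single (fst p) 1)) u * lk (rmap Th (Poly_Mapping.single (snd p) 1)) v) =
      (if (u, v) = p then (if pi_down Th u = u \<and> pi_down Th v = v then lk G p else 0) else 0)"
      unfolding p rmap_single by (auto simp: lookup_single when_def)
  qed
  also have "\<dots> = (if pi_down Th u = u \<and> pi_down Th v = v then lk G (u, v) else 0)"
    by (simp add: in_keys_iff)
  finally show ?thesis .
qed

theorem theorem1p3:
  fixes \<Theta> :: "nat \<Rightarrow> (nat list \<times> nat list) set"
  assumes cong: "\<And>n. lattice_congruence n (\<Theta> n)"
    and ins: "insertional \<Theta>"
  shows "inj_on (cmap \<Theta> :: (nat list \<Rightarrow>\<^sub>0 'k::field) \<Rightarrow> _) {f. Poly_Mapping.keys f \<subseteq> Zall \<Theta>}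
    \<and> (\<forall>f :: nat list \<Rightarrow>\<^sub>0 'k. Poly_Mapping.keys f \<subseteq> Zall \<Theta> \<longrightarrow>
         tensor_map (cmap \<Theta>) (cmap \<Theta>) (Delta_Z \<Theta> f) = Delta_S (cmap \<Theta> f))"
proof (intro conjI allI impI)
  show "inj_on (cmap \<Theta> :: (nat list \<Rightarrow>\<^sub>0 'k::field) \<Rightarrow> _) {f. Poly_Mapping.keys f \<subseteq> Zall \<Theta>}"
  proof (rule inj_onI)
    fix f1 f2 :: "nat list \<Rightarrow>\<^sub>0 'k"
    assume f1: "f1 \<in> {f. Poly_Mapping.keys f \<subseteq> Zall \<Theta>}" and f2: "f2 \<in> {f. Poly_Mapping.keys f \<subseteq> Zall \<Theta>}"
      and e: "cmap \<Theta> f1 = cmap \<Theta> f2"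
    show "f1 = f2"
    proof (rule poly_mapping_eqI)
      fix k
      show "lk f1 k = lk f2 k"
      proof (cases "k \<in> Zall \<Theta>")
        case True
        then show ?thesis using lookup_cmap_Z[OF cong _ True, of f1] lookup_cmap_Z[OF cong _ True, of f2] f1 f2 e by simp
      next
        case False
        then have "k \<notin> Poly_Mapping.keys f1" "k \<notin> Poly_Mapping.keys f2" using f1 f2 by auto
        then show ?thesis by (simp add: in_keys_iff)
      qed
    qed
  qed
next
  fix f :: "nat list \<Rightarrow>\<^sub>0 'k"
  assume kf: "Poly_Mapping.keys f \<subseteq> Zall \<Theta>"
  define G where "G = Delta_S (cmap \<Theta> f)"
  define H where "H = tensor_map (rmap \<Theta>) (rmap \<Theta>) G"
  have DZ: "Delta_Z \<Theta> f = H" unfolding Delta_Z_def H_def G_def by simp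
  have xperm: "x \<in> perms (length x)" if "x \<in> Poly_Mapping.keys f" for x using that kf Zall_iff by blast
  have lG: "lk G (a, b) = (\<Sum>x\<in>Poly_Mapping.keys f. lk f x * of_nat (cnt \<Theta> x a b))" for a b
    unfolding G_def by (rule lookup_G)
  have lH: "lk H (u, v) = (if pi_down \<Theta> u = u \<and> pi_down \<Theta> v = v then lk G (u, v) else 0)" for u v
    unfolding H_def by (rule lookH)
  show "tensor_map (cmap \<Theta>) (cmap \<Theta>) (Delta_Z \<Theta> f) = Delta_S (cmap \<Theta> f)"
    unfolding DZ G_def[symmetric]
  proof (rule poly_mapping_eqI)
    fix k :: "nat list \<times> nat list"
    obtain a b where k: "k = (a, b)" by (cases k)
    let ?P = "a \<in> perms (length a) \<and> b \<in> perms (length b)"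
    have "lk (tensor_map (cmap \<Theta>) (cmap \<Theta>) H) (a, b) =
      (\<Sum>p\<in>Poly_Mapping.keys H. if (pi_down \<Theta> a, pi_down \<Theta> b) = p then (if ?P then lk H p else 0) else 0)"
      unfolding lookup_tensor_map
    proof (rule sum.cong[OF refl])
      fix p assume p: "p \<in> Poly_Mapping.keys H"
      obtain u v where uv: "p = (u, v)" by (cases p)
      have "lk H (u, v) \<noteq> 0" using p uv by (simp add: in_keys_iff)
      then have pu: "pi_down \<Theta> u = u" and pv: "pi_down \<Theta> v = v" using lH[of u v] by (auto split: if_splits)
      show "lk H p * (lk (cmap \<Theta> (Poly_Mapping.single (fst p) 1)) a * lk (cmap \<Theta> (Poly_Mapping.single (snd p) 1)) b) =
        (if (pi_down \<Theta> a, pi_down \<Theta> b) = p then (if ?P then lk H p else 0) else 0)"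
        unfolding uv lookup_cmap_single using in_cls_iff[OF cong pu, of a] in_cls_iff[OF cong pv, of b]
        by auto
    qed
    also have "\<dots> = (if ?P then lk H (pi_down \<Theta> a, pi_down \<Theta> b) else 0)"
      by (simp add: in_keys_iff)
    also have "\<dots> = lk G (a, b)"
    proof (cases ?P)
      case True
      have pa: "pi_down \<Theta> (pi_down \<Theta> a) = pi_down \<Theta> a" using pi_idem[OF cong] True by blast
      have pb: "pi_down \<Theta> (pi_down \<Theta> b) = pi_down \<Theta> b" using pi_idem[OF cong] True by blast
      have "lk H (pi_down \<Theta> a, pi_down \<Theta> b) = lk G (pi_down \<Theta> a, pi_down \<Theta> b)" using lH pa pb by simp
      also have "\<dots> = (\<Sum>x\<in>Poly_Mapping.keys f. lk f x * of_nat (cnt \<Theta> x (pi_down \<Theta> a) (pi_down \<Theta> b)))"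
        by (rule lG)
      also have "\<dots> = (\<Sum>x\<in>Poly_Mapping.keys f. lk f x * of_nat (cnt \<Theta> x a b))"
      proof (rule sum.cong[OF refl])
        fix x assume "x \<in> Poly_Mapping.keys f"
        then have xp: "x \<in> perms (length x)" by (rule xperm)
        have "cnt \<Theta> x a b = cnt \<Theta> x (pi_down \<Theta> a) (pi_down \<Theta> b)"
          using cnt_inv[OF cong ins xp pi_rel[OF cong] pi_rel[OF cong]] True by blast
        then show "lk f x * of_nat (cnt \<Theta> x (pi_down \<Theta> a) (pi_down \<Theta> b)) = lk f x * of_nat (cnt \<Theta> x a b)"
          by simp
      qed
      also have "\<dots> = lk G (a, b)" using lG by simp
      finally show ?thesis using True by simp
    next
      case False
      then have "cnt \<Theta> x a b = 0" for x using cnt_zero by blast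
      then have g0: "lk G (a, b) = 0" using lG by simp
      show ?thesis by (subst if_not_P[OF False]) (simp add: g0)
    qed
    finally show "lk (tensor_map (cmap \<Theta>) (cmap \<Theta>) H) k = lk G k" unfolding k .
  qed
qed

end
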